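(* In the setting of the context, let $h_0=\max\{y\ge0:\frac{p(m-\sqrt m)}{1-p}\ge yp+\sqrt y\}$, $\beta=0.4215\cdot\frac{p^2+(1-p)^2}{p(1-p)}$, $h_1=h_0(1-p)-\sqrt{p(1-p)h_0}-\frac{\beta}{\sqrt{h_0}}$, and $\overline{\mathcal R_2}=\{(h,\ell):h\ge\max\{h_0,\sqrt m\},\ \ell<\sqrt m\}$. Then $$\inf_{(h,\ell)\in\overline{\mathcal R_2}}\mathbb E_{\mathbf n}\Big[\frac{\mathrm{REW}_A(\mathbf n,\rho;\mathcal G)}{\mathrm{OPT}(\mathbf n)}\Big]\ge\min\Big\{1-\frac1{\sqrt m},\ \frac{h_1}{m}\Big\}.$$
   Context: Setting: $m$ units of a divisible resource; two agent types with mean rewards $r_1>r_2$ in $(0,1)$; integers $h,\ell\ge0$ chosen adversarially; sampling probability $p\in(0,1)$; $s_1\sim\mathrm{Bin}(h,p)$, $s_2\sim\mathrm{Bin}(\ell,p)$ independent; $\mathbf n=(n_1,n_2)=(h-s_1,\ell-s_2)$; $\mathbb E_{\mathbf n}$ denotes expectation over this sampling. $\mathrm{OPT}(\mathbf n)=r_1\min\{n_1,m\}+r_2\min\{n_2,(m-n_1)^+\}$. The algorithm considered protects type 1 with protection level derived from $s_1$ (the case of the "good event" $\hat r_1>\hat r_2$, where $\hat r_i$ are empirical mean rewards of sampled agents) on the ordered sequence in which the $n_2$ type 2 agents arrive before the $n_1$ type 1 agents; its reward is $$\mathrm{REW}_A(\mathbf n,\rho;\mathcal G)=\min\Big\{n_2,\Big(m-\tfrac{1-p}{p}s_1\Big)^+\Big\}r_2+\min\Big\{m-\min\Big\{n_2,\Big(m-\tfrac{1-p}{p}s_1\Big)^+\Big\},\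 n_1\Big\}r_1.$$ *)

theory Defs
  imports "HOL-Probability.Probability"
begin

definition OPT :: "real \<Rightarrow> real \<Rightarrow> real \<Rightarrow> nat \<Rightarrow> nat \<Rightarrow> real" where
  "OPT m r1 r2 n1 n2 = r1 * min (real n1) m + r2 * min (real n2) (max (m - real n1) 0)"

text \<open>Reward of the algorithm under the good event (type 2 agents arrive first).\<close>
definition REW_A :: "real \<Rightarrow> real \<Rightarrow> real \<Rightarrow> real \<Rightarrow> nat \<Rightarrow> nat \<Rightarrow> nat \<Rightarrow> real" where
  "REW_A m p r1 r2 s1 n1 n2 =
     (let a = min (real n2) (max (m - (1 - p) / p * real s1) 0)
      in a * r2 + min (m - a) (real n1) * r1)"

definition ratio :: "real \<Rightarrow> real \<Rightarrow> real \<Rightarrow> real \<Rightarrow> nat \<Rightarrow> nat \<Rightarrow> nat \<Rightarrow> real" where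
  "ratio m p r1 r2 s1 n1 n2 =
     (if OPT m r1 r2 n1 n2 = 0 then 1 else REW_A m p r1 r2 s1 n1 n2 / OPT m r1 r2 n1 n2)"

definition expected_ratio :: "real \<Rightarrow> real \<Rightarrow> real \<Rightarrow> real \<Rightarrow> nat \<Rightarrow> nat \<Rightarrow> real" where
  "expected_ratio m p r1 r2 h l =
     measure_pmf.expectation (pair_pmf (binomial_pmf h p) (binomial_pmf l p))
       (\<lambda>(s1, s2). ratio m p r1 r2 s1 (h - s1) (l - s2))"

definition h0 :: "real \<Rightarrow> real \<Rightarrow> real" where
  "h0 m p = Sup {y. 0 \<le> y \<and> p * (m - sqrt m) / (1 - p) \<ge> y * p + sqrt y}"

definition beta :: "real \<Rightarrow> real" where
  "beta p = 0.4215 * (p\<^sup>2 + (1 - p)\<^sup>2) / (p * (1 - p))"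

definition h1 :: "real \<Rightarrow> real \<Rightarrow> real" where
  "h1 m p = h0 m p * (1 - p) - sqrt (p * (1 - p) * h0 m p) - beta p / sqrt (h0 m p)"

end

theory Submission
  imports Defs
begin


lemma bin_Suc_exp:
  fixes f :: "nat \<Rightarrow> real"
  assumes "0 \<le> p" "p \<le> 1"
  shows "measure_pmf.expectation (binomial_pmf (Suc n) p) f =
     p * measure_pmf.expectation (binomial_pmf n p) (\<lambda>k. f (Suc k))
     + (1 - p) * measure_pmf.expectation (binomial_pmf n p) f"
proof -
  have p: "p \<in> {0..1}" using assms by auto
  have eq: "binomial_pmf (Suc n) p = bernoulli_pmf p \<bind>
      (\<lambda>b. map_pmf (\<lambda>k. (if b then 1 else 0) + k) (binomial_pmf n p))"
    by (subst binomial_pmf_Suc[OF p]) (simp add: map_pmf_def)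
  have "measure_pmf.expectation (binomial_pmf (Suc n) p) f =
     (\<Sum>b\<in>UNIV. pmf (bernoulli_pmf p) b *\<^sub>R measure_pmf.expectation
        (map_pmf (\<lambda>k. (if b then 1 else 0) + k) (binomial_pmf n p)) f)"
    unfolding eq by (rule pmf_expectation_bind) (use p finite_set_pmf_binomial_pmf[OF p] in auto)
  also have "\<dots> = p * measure_pmf.expectation (binomial_pmf n p) (\<lambda>k. f (Suc k))
     + (1 - p) * measure_pmf.expectation (binomial_pmf n p) f"
    by (simp add: UNIV_bool assms)
  finally show ?thesis .
qed

lemma bin_mean:
  assumes "0 \<le> p" "p \<le> 1"
  shows "measure_pmf.expectation (binomial_pmf n p) (\<lambda>k. real k) = n * p"
proof (induction n)
  case 0
  have p: "p \<in> {0..1}" using assms by auto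
  then show ?case by (simp add: expectation_binomial_pmf'[OF p])
next
  case (Suc n)
  have p: "p \<in> {0..1}" using assms by auto
  have "measure_pmf.expectation (binomial_pmf n p) (\<lambda>k. real (Suc k)) =
     measure_pmf.expectation (binomial_pmf n p) (\<lambda>k. real k) + 1"
    using p by (simp add: Bochner_Integration.integral_add)
  then show ?case using Suc bin_Suc_exp[OF assms, of n "\<lambda>k. real k"]
    by (simp add: algebra_simps)
qed

lemma bin_sq:
  assumes "0 \<le> p" "p \<le> 1"
  shows "measure_pmf.expectation (binomial_pmf n p) (\<lambda>k. (real k)^2) = n * p * (1 - p) + (n * p)^2"
proof (induction n)
  case 0
  have p: "p \<in> {0..1}" using assms by auto
  then show ?case by (simp add: expectation_binomial_pmf'[OF p])
next
  case (Suc n)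
  have p: "p \<in> {0..1}" using assms by auto
  have "measure_pmf.expectation (binomial_pmf n p) (\<lambda>k. (real (Suc k))^2) =
     measure_pmf.expectation (binomial_pmf n p) (\<lambda>k. (real k)^2) + 2 * measure_pmf.expectation (binomial_pmf n p) (\<lambda>k. real k) + 1"
    using p by (simp add: Bochner_Integration.integral_add power2_eq_square algebra_simps)
  then show ?case using Suc bin_Suc_exp[OF assms, of n "\<lambda>k. (real k)^2"] bin_mean[OF assms, of n]
    by (simp add: algebra_simps power2_eq_square)
qed

lemma ratio_lb:
  assumes "1 \<le> m" "0 < r2" "r2 < r1" "real n2 < sqrt m"
  shows "min (m - sqrt m) (real n1) / m \<le> ratio m p r1 r2 s1 n1 n2"
proof -
  have s1: "1 \<le> sqrt m" using assms(1) by simp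
  have ss: "sqrt m * sqrt m = m" using assms(1) by simp
  have sm: "sqrt m \<le> m" using s1 ss mult_left_mono[OF s1, of "sqrt m"] by simp
  have m0: "0 < m" using assms(1) by simp
  define a where "a = min (real n2) (max (m - (1 - p) / p * real s1) 0)"
  have a0: "0 \<le> a" "a \<le> real n2" unfolding a_def by auto
  have REW: "REW_A m p r1 r2 s1 n1 n2 = a * r2 + min (m - a) (real n1) * r1"
    by (simp add: REW_A_def a_def Let_def)
  have mn: "min (m - sqrt m) (real n1) \<le> min (m - a) (real n1)"
    using a0 assms(4) by auto
  have REWlb: "min (m - sqrt m) (real n1) * r1 \<le> REW_A m p r1 r2 s1 n1 n2"
    unfolding REW using mult_right_mono[OF mn, of r1] a0 assms(2,3)
    by (smt (verit) mult_nonneg_nonneg)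
  have mnn: "0 \<le> min (m - sqrt m) (real n1)" using sm by simp
  define Y where "Y = min (real n2) (max (m - real n1) 0)"
  have Y0: "0 \<le> Y" "Y \<le> max (m - real n1) 0" unfolding Y_def by auto
  have OPT: "OPT m r1 r2 n1 n2 = r1 * min (real n1) m + r2 * Y"
    by (simp add: OPT_def Y_def)
  have OPTub: "OPT m r1 r2 n1 n2 \<le> r1 * m"
  proof -
    have "r2 * Y \<le> r1 * Y" using Y0 assms(3) by (simp add: mult_right_mono)
    moreover have "min (real n1) m + Y \<le> m" using Y0 by auto
    ultimately show ?thesis unfolding OPT using assms(2,3)
      by (smt (verit) distrib_left mult_left_mono)
  qed
  have OPT0: "0 \<le> OPT m r1 r2 n1 n2" unfolding OPT using Y0 assms(2,3) m0 by simp
  show ?thesis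
  proof (cases "OPT m r1 r2 n1 n2 = 0")
    case True
    have "min (m - sqrt m) (real n1) \<le> m - sqrt m" by simp
    then have "min (m - sqrt m) (real n1) \<le> m" using s1 by linarith
    then have "min (m - sqrt m) (real n1) / m \<le> 1" using m0 by simp
    then show ?thesis unfolding ratio_def using True by simp
  next
    case False
    then have Op: "0 < OPT m r1 r2 n1 n2" using OPT0 by simp
    have R0: "0 \<le> REW_A m p r1 r2 s1 n1 n2" using REWlb mnn assms(2,3) by (smt (verit) mult_nonneg_nonneg)
    have "min (m - sqrt m) (real n1) / m = min (m - sqrt m) (real n1) * r1 / (r1 * m)"
      using assms(2,3) by simp
    also have "\<dots> \<le> REW_A m p r1 r2 s1 n1 n2 / (r1 * m)"
      by (rule divide_right_mono[OF REWlb]) (use m0 assms(2,3) in simp)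
    also have "\<dots> \<le> REW_A m p r1 r2 s1 n1 n2 / OPT m r1 r2 n1 n2"
      using R0 Op OPTub by (simp add: divide_left_mono)
    finally show ?thesis unfolding ratio_def using False by simp
  qed
qed

lemma min_quad:
  fixes K x mu c :: real
  assumes "0 < c + mu - K"
  shows "K - (mu - x + c)^2 / (4*(c + mu - K)) \<le> min K x"
proof (cases "K \<le> x")
  case True
  have "0 \<le> (mu - x + c)^2 / (4*(c + mu - K))" using assms by simp
  then show ?thesis using True by simp
next
  case False
  have "4*(c + mu - K)*(K - x) \<le> (mu - x + c)^2"
  proof -
    have "(mu - x + c)^2 - 4*(c + mu - K)*(K - x) = (2*K - x - mu - c)^2"
      by (simp add: power2_eq_square algebra_simps)
    then show ?thesis using zero_le_power2[of "2*K - x - mu - c"] by linarith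
  qed
  then have "K - x \<le> (mu - x + c)^2 / (4*(c + mu - K))"
    using assms by (simp add: pos_le_divide_eq mult.commute)
  then show ?thesis using False by simp
qed

lemma bin_quad:
  assumes "0 \<le> p" "p \<le> 1"
  shows "measure_pmf.expectation (binomial_pmf n p) (\<lambda>s. (real s - z)^2)
     = n * p * (1 - p) + (n * p - z)^2"
proof -
  have p: "p \<in> {0..1}" using assms by auto
  have eq: "(\<lambda>s. (real s - z)^2) = (\<lambda>s. (real s)^2 - 2 * z * real s + z^2)"
    by (auto simp: power2_eq_square algebra_simps)
  show ?thesis unfolding eq using p bin_sq[OF assms, of n] bin_mean[OF assms, of n]
    by (simp add: Bochner_Integration.integral_add Bochner_Integration.integral_diff power2_eq_square algebra_simps)
qed


lemma key_p:
  assumes "0 < p" "p < 1" "0 < u"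
  shows "p \<le> 4 * (sqrt (p * (1 - p)) * u + beta p / u)"
proof -
  define r where "r = sqrt (p * (1 - p))"
  have q0: "0 < p * (1 - p)" using assms by simp
  have r0: "0 < r" unfolding r_def using q0 by simp
  have r2: "r^2 = p * (1 - p)" unfolding r_def using q0 by simp
  have "p * (1 - p) \<le> (1/2)^2"
  proof -
    have "(1/2)^2 - p * (1 - p) = (p - 1/2)^2" by (simp add: power2_eq_square algebra_simps)
    then show ?thesis using zero_le_power2[of "p - 1/2"] by linarith
  qed
  then have "r^2 \<le> (1/2)^2" using r2 by linarith
  then have rle: "r \<le> 1/2" by (rule power2_le_imp_le) simp
  define s where "s = p^2 + (1-p)^2"
  have sge: "1/2 \<le> s"
  proof -
    have "s - 1/2 = 2 * (p - 1/2)^2" unfolding s_def by (simp add: power2_eq_square algebra_simps)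
    then show ?thesis using zero_le_power2[of "p - 1/2"] by linarith
  qed
  have beta_eq: "beta p = 0.4215 * s / r^2" unfolding beta_def s_def r2 by simp
  have b0: "0 \<le> beta p" unfolding beta_eq using sge by simp
  show ?thesis
  proof (cases "1/4 \<le> r * u")
    case True
    have "0 \<le> beta p / u" using b0 assms by simp
    have gen: "p \<le> 4*(a+b)" if "1/4 \<le> a" "0 \<le> b" for a b using that assms by (simp add: algebra_simps)
    show ?thesis by (rule gen) (use True \<open>0 \<le> beta p / u\<close> r_def in auto)
  next
    case False
    have "beta p * r = 0.4215 * s / r" unfolding beta_eq using r0 by (simp add: power2_eq_square)
    also have "\<dots> \<ge> 0.4215" using sge rle r0 by (simp add: pos_le_divide_eq)
    finally have br: "0.4215 \<le> beta p * r" .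
    have "u * r < 1/4" using False by (simp add: mult.commute)
    have "u / 4 \<le> beta p"
    proof -
      have c1: "u * r / 4 \<le> 1/16" using \<open>u * r < 1/4\<close> by (simp add: algebra_simps)
      have c2: "(1/16::real) \<le> 0.4215" by simp
      have "u * r / 4 \<le> beta p * r" using order_trans[OF c1 order_trans[OF c2 br]] .
      then show ?thesis using r0 by (simp add: mult.commute)
    qed
    then have "1 \<le> 4 * (beta p / u)" using assms by (simp add: pos_le_divide_eq field_simps)
    moreover have "0 \<le> sqrt (p * (1 - p)) * u" using assms q0 by simp
    moreover have gen2: "p \<le> 4*(a+b)" if "0 \<le> a" "1 \<le> 4*b" for a b using that assms by (simp add: algebra_simps)
    ultimately show ?thesis by blast
  qed
qed

lemma beta_nonneg:
  assumes "0 < p" "p < 1"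
  shows "0 \<le> beta p"
proof -
  have "0 < p * (1 - p)" using assms by simp
  moreover have "0 \<le> 0.4215 * (p\<^sup>2 + (1 - p)\<^sup>2)" by simp
  ultimately show ?thesis unfolding beta_def by (simp add: divide_nonneg_pos)
qed

theorem lemma6:
  fixes m p r1 r2 :: real
  assumes "1 \<le> m"
    and "0 < p" "p < 1"
    and "0 < r2" "r2 < r1" "r1 < 1"
  shows "\<forall>h l::nat. real h \<ge> max (h0 m p) (sqrt m) \<and> real l < sqrt m \<longrightarrow>
           expected_ratio m p r1 r2 h l \<ge> min (1 - 1 / sqrt m) (h1 m p / m)"
proof (intro allI impI)
  fix h l :: nat
  assume H: "real h \<ge> max (h0 m p) (sqrt m) \<and> real l < sqrt m"
  have hh0: "h0 m p \<le> real h" and hl: "real l < sqrt m" using H by auto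
  have pI: "p \<in> {0..1}" using assms by auto
  have s1: "1 \<le> sqrt m" using assms(1) by simp
  have ss: "sqrt m * sqrt m = m" using assms(1) by simp
  have sm: "sqrt m \<le> m" using s1 ss mult_left_mono[OF s1, of "sqrt m"] by simp
  have m0: "0 < m" using assms(1) by simp
  define K where "K = m - sqrt m"
  have K0: "0 \<le> K" using sm K_def by simp
  define S where "S = {y. 0 \<le> y \<and> p * (m - sqrt m) / (1 - p) \<ge> y * p + sqrt y}"
  have h0S: "h0 m p = Sup S" unfolding h0_def S_def ..
  have S0: "0 \<in> S" unfolding S_def using assms sm by simp
  have ub: "y \<le> K / (1 - p)" if "y \<in> S" for y
  proof -
    have y0: "0 \<le> y" and yl: "y * p + sqrt y \<le> p * K / (1 - p)" using that unfolding S_def K_def by auto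
    have e: "p * K / (1 - p) = (K / (1 - p)) * p" by simp
    have "y * p \<le> (K / (1 - p)) * p" using yl real_sqrt_ge_zero[OF y0] unfolding e by linarith
    then show ?thesis using assms(2) by (rule mult_right_le_imp_le)
  qed
  have bdd: "bdd_above S" unfolding bdd_above_def using ub by blast
  have h0nn: "0 \<le> h0 m p" unfolding h0S using cSup_upper[OF S0 bdd] .
  have h0ub: "h0 m p \<le> K / (1 - p)" unfolding h0S by (rule cSup_least) (use S0 ub in auto)
  define D where "D = K - h0 m p * (1 - p)"
  have D0: "0 \<le> D" using h0ub assms(3) unfolding D_def by (simp add: pos_le_divide_eq)
  define B1 where "B1 = binomial_pmf h p"
  define B2 where "B2 = binomial_pmf l p"
  define g where "g = (\<lambda>s::nat. min K (real (h - s)) / m)"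
  have fin: "finite (set_pmf (pair_pmf B1 B2))" using assms by (simp add: B1_def B2_def)
  have stepA: "measure_pmf.expectation B1 g \<le> expected_ratio m p r1 r2 h l"
  proof -
    have "measure_pmf.expectation B1 g = measure_pmf.expectation (pair_pmf B1 B2) (\<lambda>x. g (fst x))"
      by (metis integral_map_pmf map_fst_pair_pmf)
    also have "\<dots> \<le> measure_pmf.expectation (pair_pmf B1 B2)
                   (\<lambda>(s1, s2). ratio m p r1 r2 s1 (h - s1) (l - s2))"
    proof (rule integral_mono)
      show "integrable (measure_pmf (pair_pmf B1 B2)) (\<lambda>x. g (fst x))"
        using fin by (rule integrable_measure_pmf_finite)
      show "integrable (measure_pmf (pair_pmf B1 B2)) (\<lambda>(s1, s2). ratio m p r1 r2 s1 (h - s1) (l - s2))"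
        using fin by (rule integrable_measure_pmf_finite)
      fix x :: "nat \<times> nat"
      obtain s1 s2 where x: "x = (s1, s2)" by (cases x)
      have "real (l - s2) < sqrt m" using hl by linarith
      then have "min (m - sqrt m) (real (h - s1)) / m \<le> ratio m p r1 r2 s1 (h - s1) (l - s2)"
        by (rule ratio_lb[OF assms(1,4,5)])
      then show "g (fst x) \<le> (case x of (s1, s2) \<Rightarrow> ratio m p r1 r2 s1 (h - s1) (l - s2))"
        unfolding x g_def K_def by simp
    qed
    also have "\<dots> = expected_ratio m p r1 r2 h l"
      unfolding expected_ratio_def B1_def B2_def ..
    finally show ?thesis .
  qed
  have gnn: "0 \<le> measure_pmf.expectation B1 g"
    by (rule Bochner_Integration.integral_nonneg) (use K0 m0 in \<open>simp add: g_def\<close>)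
  show "expected_ratio m p r1 r2 h l \<ge> min (1 - 1 / sqrt m) (h1 m p / m)"
  proof (cases "h0 m p = 0")
    case True
    then have "h1 m p = 0" by (simp add: h1_def)
    then have "min (1 - 1 / sqrt m) (h1 m p / m) \<le> 0" by simp
    then show ?thesis using stepA gnn by linarith
  next
    case False
    then have h0p: "0 < h0 m p" using h0nn by simp
    define u where "u = sqrt (h0 m p)"
    have u0: "0 < u" unfolding u_def using h0p by simp
    define \<sigma> where "\<sigma> = sqrt (p * (1 - p)) * u"
    have q0: "0 < p * (1 - p)" using assms by simp
    have \<sigma>eq: "sqrt (p * (1 - p) * h0 m p) = \<sigma>" by (simp add: \<sigma>_def u_def real_sqrt_mult)
    have \<sigma>2: "\<sigma>^2 = p * (1 - p) * h0 m p"
      unfolding \<sigma>_def u_def using q0 h0nn by (simp add: power_mult_distrib)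
    have \<sigma>p: "0 < \<sigma>" unfolding \<sigma>_def using q0 u0 by simp
    define V where "V = beta p / u"
    have V0: "0 \<le> V" unfolding V_def using beta_nonneg[OF assms(2,3)] u0 by simp
    have kp: "p \<le> 4 * (\<sigma> + V)" using key_p[OF assms(2,3) u0] unfolding \<sigma>_def V_def .
    have h1eq: "h1 m p = h0 m p * (1 - p) - \<sigma> - V"
      unfolding h1_def \<sigma>eq V_def u_def ..
    define c where "c = 2 * D + \<sigma>"
    define T where "T = (real h - h0 m p) * (1 - p)"
    have T0: "0 \<le> T" unfolding T_def using hh0 assms(3) by simp
    define Q where "Q = c + real h * (1 - p) - K"
    have Qeq: "Q = D + \<sigma> + T" by (simp add: Q_def c_def D_def T_def algebra_simps)
    have Qp: "0 < Q" using Qeq D0 \<sigma>p T0 by simp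
    define bnd where "bnd = (\<lambda>s::nat. (K - (real s - real h * p + c)^2 / (4 * Q)) / m)"
    have stepB: "measure_pmf.expectation B1 bnd \<le> measure_pmf.expectation B1 g"
    proof (rule integral_mono)
      show "integrable (measure_pmf B1) bnd" unfolding B1_def using pI by simp
      show "integrable (measure_pmf B1) g" unfolding B1_def using pI by simp
      fix s :: nat
      have e: "real h * (1 - p) - (real h - real s) + c = real s - real h * p + c"
        by (simp add: algebra_simps)
      have f1: "K - (real h * (1 - p) - (real h - real s) + c)^2 / (4 * Q)
            \<le> min K (real h - real s)"
        unfolding Q_def by (rule min_quad) (use Qp Q_def in simp)
      have f2: "min K (real h - real s) \<le> min K (real (h - s))" by linarith
      have "K - (real s - real h * p + c)^2 / (4 * Q) \<le> min K (real (h - s))"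
        using f1 f2 unfolding e by linarith
      then show "bnd s \<le> g s" unfolding bnd_def g_def using m0 by (simp add: divide_right_mono)
    qed
    have stepC: "measure_pmf.expectation B1 bnd = (K - (real h * p * (1 - p) + c^2) / (4 * Q)) / m"
    proof -
      have eq: "(\<lambda>s. (real s - real h * p + c)^2) = (\<lambda>s. (real s - (real h * p - c))^2)"
        by (rule ext) (simp add: algebra_simps)
      have E2: "measure_pmf.expectation B1 (\<lambda>s. (real s - real h * p + c)^2) = real h * p * (1 - p) + c^2"
        unfolding B1_def eq using bin_quad[of p h "real h * p - c"] assms by simp
      have "measure_pmf.expectation B1 bnd =
         (measure_pmf.expectation B1 (\<lambda>s. K) - measure_pmf.expectation B1 (\<lambda>s. (real s - real h * p + c)^2) / (4 * Q)) / m"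
        unfolding bnd_def B1_def using pI
        by (simp add: Bochner_Integration.integral_diff)
      also have "\<dots> = (K - (real h * p * (1 - p) + c^2) / (4 * Q)) / m"
        using E2 by simp
      finally show ?thesis .
    qed
    have stepD: "h1 m p \<le> K - (real h * p * (1 - p) + c^2) / (4 * Q)"
    proof -
      define A where "A = D + \<sigma>"
      have hq: "real h * p * (1 - p) = \<sigma>^2 + p * T"
        unfolding \<sigma>2 T_def by (simp add: algebra_simps)
      have f1: "0 \<le> 4 * A^2 - \<sigma>^2 - (A + D)^2"
      proof -
        have "4 * A^2 - \<sigma>^2 - (A + D)^2 = 4 * D * \<sigma> + 2 * \<sigma>^2"
          unfolding A_def by (simp add: power2_eq_square algebra_simps)
        moreover have "0 \<le> 4 * D * \<sigma> + 2 * \<sigma>^2" using D0 \<sigma>p by simp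
        ultimately show ?thesis by linarith
      qed
      have f2: "0 \<le> T * (4 * A + 4 * V - p)" using T0 kp D0 unfolding A_def by simp
      have f3: "0 \<le> 4 * A * V" using D0 \<sigma>p V0 unfolding A_def by simp
      have iden: "4 * Q * (D + \<sigma> + V) - (real h * p * (1 - p) + c^2)
          = (4 * A^2 - \<sigma>^2 - (A + D)^2) + 4 * A * V + T * (4 * A + 4 * V - p)"
        unfolding hq Qeq c_def A_def by (simp add: power2_eq_square algebra_simps)
      have "real h * p * (1 - p) + c^2 \<le> 4 * Q * (D + \<sigma> + V)"
        using iden f1 f2 f3 by linarith
      then have "(real h * p * (1 - p) + c^2) / (4 * Q) \<le> D + \<sigma> + V"
        using Qp by (simp add: pos_divide_le_eq mult.commute)
      then show ?thesis unfolding h1eq D_def by linarith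
    qed
    have "min (1 - 1 / sqrt m) (h1 m p / m) \<le> h1 m p / m" by simp
    also have "\<dots> \<le> (K - (real h * p * (1 - p) + c^2) / (4 * Q)) / m"
      using stepD m0 by (simp add: divide_right_mono)
    also have "\<dots> \<le> expected_ratio m p r1 r2 h l"
      using stepA stepB stepC by linarith
    finally show ?thesis .
  qed
qed

end
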